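(* Let $f\colon[0,\infty)\to\mathbb{R}$ be continuous and suppose there are $c\in\mathbb R$, $\epsilon>0$ with $f(\zeta)-c/\zeta=O(\zeta^{-1-\epsilon})$ as $\zeta\to\infty$, and let $F(z)=\int_0^\infty f(\zeta)\zeta^{-z}\,d\zeta$ (absolutely convergent for $0<\operatorname{Re} z<1$). Fix an integer $N\ge1$ and $z\in\mathbb C$ with $0<\operatorname{Re}z<1/N$. For $s>0$ define complex numbers $\phi_s(w)$ for all rooted forests $w$ with $|w|\le N$ recursively by $\phi_s(\mathbb 1)=1$, $\phi_s(w w')=\phi_s(w)\phi_s(w')$, and $$\phi_s(B_+(w))=\int_0^\infty f(\zeta)\,(s\zeta)^{-z}\,\phi_{s\zeta}(w)\,d\zeta .$$ Then all these integrals converge and for every forest $w$ with $|w|\le N$ and every $s>0$, $$\phi_s(w)=s^{-z|w|}\prod_{v\in V(w)}F\big(z\,|w_v|\big).$$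
   Context: Rooted forests, $|w|$ (number of nodes), $V(w)$ (set of nodes), $\mathbb 1$ (empty forest), product of forests = disjoint union, $B_+$ (grafting all trees of a forest onto a new root), and $w_v$ (the subtree of $w$ rooted at node $v$, consisting of $v$ and its descendants) are as in the Connes–Kreimer Hopf algebra of rooted trees. *)

theory Defs
  imports "HOL-Analysis.Analysis" "HOL-Library.Landau_Symbols" "HOL-Library.Multiset"
begin

text \<open>Rooted trees: a node together with the (unordered, but listed) forest of its children.
  A rooted forest is a list of rooted trees; the product of forests is concatenation
  (disjoint union), the empty forest is the empty list, and B_+ of a forest ts is Node ts.\<close>
datatype rtree = Node "rtree list"

fun tree_size :: "rtree \<Rightarrow> nat" where
  "tree_size (Node ts) = Suc (sum_list (map tree_size ts))"

definition forest_size :: "rtree list \<Rightarrow> nat" where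
  "forest_size w = sum_list (map tree_size w)"

fun node_subtrees :: "rtree \<Rightarrow> rtree multiset" where
  "node_subtrees (Node ts) = add_mset (Node ts) (sum_list (map node_subtrees ts))"

definition forest_node_subtrees :: "rtree list \<Rightarrow> rtree multiset" where
  "forest_node_subtrees w = sum_list (map node_subtrees w)"

definition mellinF :: "(real \<Rightarrow> real) \<Rightarrow> complex \<Rightarrow> complex" where
  "mellinF f z = (LINT \<zeta>:{0<..}|lborel. complex_of_real (f \<zeta>) * (complex_of_real \<zeta>) powr (-z))"

fun phi_tree :: "(real \<Rightarrow> real) \<Rightarrow> complex \<Rightarrow> rtree \<Rightarrow> real \<Rightarrow> complex" where
  "phi_tree f z (Node ts) s =
     (LINT \<zeta>:{0<..}|lborel. complex_of_real (f \<zeta>) * (complex_of_real (s * \<zeta>)) powr (-z)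
        * prod_list (map (\<lambda>t. phi_tree f z t (s * \<zeta>)) ts))"

definition phi_forest :: "(real \<Rightarrow> real) \<Rightarrow> complex \<Rightarrow> rtree list \<Rightarrow> real \<Rightarrow> complex" where
  "phi_forest f z w s = prod_list (map (\<lambda>t. phi_tree f z t s) w)"

end

theory Submission imports Defs begin

lemma leb_to_lborel:
  fixes g :: "real \<Rightarrow> 'b::{banach, second_countable_topology}"
  assumes "set_integrable lebesgue A g" "set_borel_measurable lborel A g"
  shows "set_integrable lborel A g"
  using assms unfolding set_integrable_def set_borel_measurable_def
  by (simp add: integrable_completion)

lemma powr_piece0:
  assumes "r > -1" "M \<ge> 0"
  shows "set_integrable lborel {0<..M} (\<lambda>x::real. x powr r)"
  apply (rule leb_to_lborel)
   apply (rule nonnegative_absolutely_integrable_1)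
    apply (rule integrable_on_powr_from_0') using assms apply auto[2]
   apply simp
  unfolding set_borel_measurable_def by measurable

lemma powr_piece_inf:
  assumes "r < -1" "M > 0"
  shows "set_integrable lborel {M..} (\<lambda>x::real. x powr r)"
  apply (rule leb_to_lborel)
   apply (rule nonnegative_absolutely_integrable_1)
  using has_integral_powr_to_inf[OF assms] apply (auto simp: integrable_on_def)[1]
   apply simp
  unfolding set_borel_measurable_def by measurable


lemma cont_integrand:
  assumes cont: "continuous_on {0..} f"
  shows "continuous_on {0<..} (\<lambda>\<zeta>::real. complex_of_real (f \<zeta>) * complex_of_real \<zeta> powr (-w))"
proof -
  have "continuous_on {0<..} f" using cont by (rule continuous_on_subset) auto
  then have "continuous_on {0<..} (\<lambda>\<zeta>. complex_of_real (f \<zeta>))" by (intro continuous_intros)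
  moreover have "continuous_on {0<..} (\<lambda>\<zeta>::real. complex_of_real \<zeta> powr (-w))"
    by (intro continuous_intros) auto
  ultimately show ?thesis by (rule continuous_on_mult)
qed

lemma meas_integrand:
  assumes cont: "continuous_on {0..} f" and A: "A \<subseteq> {0<..}" "A \<in> sets borel"
  shows "set_borel_measurable lborel A (\<lambda>\<zeta>::real. complex_of_real (f \<zeta>) * complex_of_real \<zeta> powr (-w))"
  unfolding set_borel_measurable_def measurable_lborel2
  by (rule borel_measurable_continuous_on_indicator[OF A(2)])
     (rule continuous_on_subset[OF cont_integrand[OF cont] A(1)])

lemma norm_integrand:
  assumes "\<zeta> > 0"
  shows "norm (complex_of_real (f \<zeta>) * complex_of_real \<zeta> powr (-w)) = \<bar>f \<zeta>\<bar> * \<zeta> powr (- Re w)"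
  using assms by (simp add: norm_mult norm_powr_real_powr)


lemma mellin_integrable:
  fixes f :: "real \<Rightarrow> real"
  assumes cont: "continuous_on {0..} f" and eps: "\<epsilon> > 0"
    and asym: "(\<lambda>\<zeta>. f \<zeta> - c / \<zeta>) \<in> O[at_top](\<lambda>\<zeta>. \<zeta> powr (-1 - \<epsilon>))"
    and w: "0 < Re w" "Re w < 1"
  shows "set_integrable lborel {0<..} (\<lambda>\<zeta>. complex_of_real (f \<zeta>) * complex_of_real \<zeta> powr (-w))"
proof -
  define h where "h = (\<lambda>\<zeta>. complex_of_real (f \<zeta>) * complex_of_real \<zeta> powr (-w))"
  obtain C where C: "C > 0" and ev: "eventually (\<lambda>x. norm (f x - c / x) \<le> C * norm (x powr (-1-\<epsilon>))) at_top"
    using asym by (elim landau_o.bigE)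
  then obtain M0 where M0: "\<And>x. x \<ge> M0 \<Longrightarrow> norm (f x - c / x) \<le> C * norm (x powr (-1-\<epsilon>))"
    by (auto simp: eventually_at_top_linorder)
  define M where "M = max 1 M0"
  define K where "K = \<bar>c\<bar> + C"
  have M1: "M \<ge> 1" by (simp add: M_def)
  have fbound: "\<bar>f x\<bar> \<le> K / x" if x: "x \<ge> M" for x
  proof -
    have x1: "x \<ge> 1" using x M1 by linarith
    have "\<bar>f x - c / x\<bar> \<le> C * x powr (-1-\<epsilon>)" using M0[of x] x by (simp add: M_def)
    also have "x powr (-1-\<epsilon>) \<le> x powr (-1)" using x1 eps by (intro powr_mono) auto
    hence "C * x powr (-1-\<epsilon>) \<le> C * (1 / x)" using C x1 by (simp add: powr_minus divide_inverse)
    finally have "\<bar>f x - c / x\<bar> \<le> C / x" by simp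
    hence "\<bar>f x\<bar> \<le> \<bar>c / x\<bar> + C / x" by linarith
    also have "\<bar>c / x\<bar> = \<bar>c\<bar> / x" using x1 by simp
    finally show ?thesis by (simp add: K_def add_divide_distrib)
  qed
  have "bounded (f ` {0..M})"
    by (rule compact_imp_bounded, rule compact_continuous_image)
       (use cont in \<open>auto intro: continuous_on_subset\<close>)
  then obtain B where B: "\<And>x. x \<in> {0..M} \<Longrightarrow> \<bar>f x\<bar> \<le> B"
    unfolding bounded_iff by (metis atLeastAtMost_iff image_eqI real_norm_def)
  have I1: "set_integrable lborel {0<..M} h"
  proof (rule set_integrable_bound)
    show "set_integrable lborel {0<..M} (\<lambda>x. B * x powr (- Re w))"
      using powr_piece0[of "- Re w" M] w M1 by auto
    show "set_borel_measurable lborel {0<..M} h" unfolding h_def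
      by (rule meas_integrand[OF cont]) auto
    show "AE x in lborel. x \<in> {0<..M} \<longrightarrow> norm (h x) \<le> norm (B * x powr (- Re w))"
    proof (rule AE_I2, intro impI)
      fix x assume x: "x \<in> {0<..M}"
      have "norm (h x) = \<bar>f x\<bar> * x powr (- Re w)" using x by (simp add: h_def norm_integrand)
      also have "\<dots> \<le> B * x powr (- Re w)" using B[of x] x by (intro mult_right_mono) auto
      also have "\<dots> \<le> norm (B * x powr (- Re w))" by simp
      finally show "norm (h x) \<le> norm (B * x powr (- Re w))" .
    qed
  qed
  have I2: "set_integrable lborel {M..} h"
  proof (rule set_integrable_bound)
    show "set_integrable lborel {M..} (\<lambda>x. K * x powr (-1 - Re w))"
      using powr_piece_inf[of "-1 - Re w" M] w M1 by auto
    show "set_borel_measurable lborel {M..} h" unfolding h_def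
      by (rule meas_integrand[OF cont]) (use M1 in auto)
    show "AE x in lborel. x \<in> {M..} \<longrightarrow> norm (h x) \<le> norm (K * x powr (-1 - Re w))"
    proof (rule AE_I2, intro impI)
      fix x assume x: "x \<in> {M..}"
      hence xp: "x > 0" using M1 by auto
      have "norm (h x) = \<bar>f x\<bar> * x powr (- Re w)" using xp by (simp add: h_def norm_integrand)
      also have "\<dots> \<le> (K / x) * x powr (- Re w)" using fbound[of x] x by (intro mult_right_mono) auto
      also have "(K / x) * x powr (- Re w) = K * x powr (-1 - Re w)"
        using xp by (simp add: powr_diff powr_minus divide_simps)
      also have "\<dots> \<le> norm (K * x powr (-1 - Re w))" by simp
      finally show "norm (h x) \<le> norm (K * x powr (-1 - Re w))" .
    qed
  qed
  have "set_integrable lborel ({0<..M} \<union> {M..}) h"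
    by (rule set_integrable_Un[OF I1 I2]) auto
  also have "{0<..M} \<union> {M..} = {0<..}" using M1 by auto
  finally show ?thesis unfolding h_def .
qed


lemma powr_split:
  assumes "s > 0" "\<zeta> > 0"
  shows "complex_of_real (s*\<zeta>) powr (-z) * complex_of_real (s*\<zeta>) powr (-z * of_nat m)
       = complex_of_real s powr (-z * of_nat (Suc m)) * complex_of_real \<zeta> powr (-z * of_nat (Suc m))"
proof -
  have "complex_of_real (s*\<zeta>) powr (-z) * complex_of_real (s*\<zeta>) powr (-z * of_nat m)
      = complex_of_real (s*\<zeta>) powr (-z * of_nat (Suc m))"
    by (simp add: powr_add[symmetric] algebra_simps)
  also have "\<dots> = complex_of_real s powr (-z * of_nat (Suc m)) * complex_of_real \<zeta> powr (-z * of_nat (Suc m))"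
    using assms by (simp only: of_real_mult, intro powr_times_real) auto
  finally show ?thesis .
qed

lemma forest_formula:
  assumes "\<And>t s. t \<in> set w \<Longrightarrow> s > 0 \<Longrightarrow> phi_tree f z t s =
     complex_of_real s powr (- z * of_nat (tree_size t)) * (\<Prod>u\<in>#node_subtrees t. mellinF f (z * of_nat (tree_size u)))"
    and "s > 0"
  shows "phi_forest f z w s = complex_of_real s powr (- z * of_nat (forest_size w))
              * (\<Prod>t\<in>#forest_node_subtrees w. mellinF f (z * of_nat (tree_size t)))"
  using assms(1)
proof (induction w)
  case Nil
  then show ?case using assms(2) by (simp add: phi_forest_def forest_size_def forest_node_subtrees_def)
next
  case (Cons t w)
  have IH: "phi_forest f z w s = complex_of_real s powr (- z * of_nat (forest_size w))
              * (\<Prod>t\<in>#forest_node_subtrees w. mellinF f (z * of_nat (tree_size t)))"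
    using Cons by auto
  have T: "phi_tree f z t s =
     complex_of_real s powr (- z * of_nat (tree_size t)) * (\<Prod>u\<in>#node_subtrees t. mellinF f (z * of_nat (tree_size u)))"
    using Cons.prems assms(2) by auto
  have "phi_forest f z (t # w) s = phi_tree f z t s * phi_forest f z w s"
    by (simp add: phi_forest_def)
  also have "\<dots> = complex_of_real s powr (- z * of_nat (forest_size (t # w)))
              * (\<Prod>t\<in>#forest_node_subtrees (t # w). mellinF f (z * of_nat (tree_size t)))"
    unfolding T IH by (simp add: forest_size_def forest_node_subtrees_def powr_add[symmetric] algebra_simps)
  finally show ?case .
qed

lemma tree_formula:
  assumes "s > 0"
  shows "phi_tree f z t s =
     complex_of_real s powr (- z * of_nat (tree_size t)) * (\<Prod>u\<in>#node_subtrees t. mellinF f (z * of_nat (tree_size u)))"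
  using assms
proof (induction t arbitrary: s)
  case (Node ts)
  define m where "m = forest_size ts"
  define P where "P = (\<Prod>t\<in>#forest_node_subtrees ts. mellinF f (z * of_nat (tree_size t)))"
  have F: "phi_forest f z ts r = complex_of_real r powr (- z * of_nat m) * P" if "r > 0" for r
    unfolding m_def P_def by (rule forest_formula) (use Node.IH that in auto)
  have "phi_tree f z (Node ts) s = (LINT \<zeta>:{0<..}|lborel. complex_of_real (f \<zeta>) * (complex_of_real (s * \<zeta>)) powr (-z)
        * phi_forest f z ts (s * \<zeta>))"
    by (simp add: phi_forest_def)
  also have "\<dots> = (LINT \<zeta>:{0<..}|lborel. (complex_of_real s powr (-z * of_nat (Suc m)) * P) *
        (complex_of_real (f \<zeta>) * complex_of_real \<zeta> powr (- (z * of_nat (Suc m)))))"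
  proof (rule set_lebesgue_integral_cong, simp, intro allI impI)
    fix \<zeta> :: real assume "\<zeta> \<in> {0<..}"
    hence z: "\<zeta> > 0" by simp
    have sz: "s * \<zeta> > 0" using z Node.prems by simp
    show "complex_of_real (f \<zeta>) * (complex_of_real (s * \<zeta>)) powr (-z) * phi_forest f z ts (s * \<zeta>)
       = (complex_of_real s powr (-z * of_nat (Suc m)) * P) *
        (complex_of_real (f \<zeta>) * complex_of_real \<zeta> powr (- (z * of_nat (Suc m))))"
      unfolding F[OF sz] using powr_split[OF Node.prems z, of z m]
      by (simp add: algebra_simps)
  qed
  also have "\<dots> = (complex_of_real s powr (-z * of_nat (Suc m)) * P) * mellinF f (z * of_nat (Suc m))"
    by (simp add: mellinF_def)
  also have "\<dots> = complex_of_real s powr (- z * of_nat (tree_size (Node ts))) * (\<Prod>u\<in>#node_subtrees (Node ts). mellinF f (z * of_nat (tree_size u)))"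
    by (simp add: m_def P_def forest_size_def forest_node_subtrees_def)
  finally show ?case .
qed


theorem mainTheorem2:
  fixes f :: "real \<Rightarrow> real" and c :: real and \<epsilon> :: real and N :: nat and z :: complex
  assumes cont: "continuous_on {0..} f"
    and eps: "\<epsilon> > 0"
    and asym: "(\<lambda>\<zeta>. f \<zeta> - c / \<zeta>) \<in> O[at_top](\<lambda>\<zeta>. \<zeta> powr (-1 - \<epsilon>))"
    and N: "N \<ge> 1"
    and z: "0 < Re z" "Re z < 1 / real N"
  shows "(\<forall>ts s. tree_size (Node ts) \<le> N \<longrightarrow> s > 0 \<longrightarrow>
            set_integrable lborel {0<..}
              (\<lambda>\<zeta>. complex_of_real (f \<zeta>) * (complex_of_real (s * \<zeta>)) powr (-z)
                     * phi_forest f z ts (s * \<zeta>)))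
       \<and> (\<forall>w s. forest_size w \<le> N \<longrightarrow> s > 0 \<longrightarrow>
            phi_forest f z w s =
              complex_of_real s powr (- z * of_nat (forest_size w))
              * (\<Prod>t\<in>#forest_node_subtrees w. mellinF f (z * of_nat (tree_size t))))"
proof (intro conjI allI impI)
  fix w :: "rtree list" and s :: real
  assume "s > 0"
  then show "phi_forest f z w s =
              complex_of_real s powr (- z * of_nat (forest_size w))
              * (\<Prod>t\<in>#forest_node_subtrees w. mellinF f (z * of_nat (tree_size t)))"
    by (intro forest_formula tree_formula)
next
  fix ts :: "rtree list" and s :: real
  assume sz: "tree_size (Node ts) \<le> N" and s: "s > 0"
  define m where "m = forest_size ts"
  define P where "P = (\<Prod>t\<in>#forest_node_subtrees ts. mellinF f (z * of_nat (tree_size t)))"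
  have msz: "Suc m \<le> N" using sz by (simp add: m_def forest_size_def)
  have F: "phi_forest f z ts r = complex_of_real r powr (- z * of_nat m) * P" if "r > 0" for r
    unfolding m_def P_def by (intro forest_formula tree_formula that)
  have w1: "0 < Re (z * of_nat (Suc m))" using z by simp
  have "Re (z * of_nat (Suc m)) = Re z * real (Suc m)" by simp
  also have "\<dots> \<le> Re z * real N" using msz z by (intro mult_left_mono) auto
  also have "\<dots> < 1" using z N by (simp add: field_simps)
  finally have w2: "Re (z * of_nat (Suc m)) < 1" .
  have I: "set_integrable lborel {0<..} (\<lambda>\<zeta>. (complex_of_real s powr (-z * of_nat (Suc m)) * P) *
        (complex_of_real (f \<zeta>) * complex_of_real \<zeta> powr (- (z * of_nat (Suc m)))))"
    by (intro set_integrable_mult_right mellin_integrable[OF cont eps asym w1 w2])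
  show "set_integrable lborel {0<..}
              (\<lambda>\<zeta>. complex_of_real (f \<zeta>) * (complex_of_real (s * \<zeta>)) powr (-z)
                     * phi_forest f z ts (s * \<zeta>))"
  proof (subst set_integrable_cong[OF refl refl])
    fix \<zeta> :: real assume "\<zeta> \<in> {0<..}"
    hence zz: "\<zeta> > 0" by simp
    have sz': "s * \<zeta> > 0" using zz s by simp
    show "complex_of_real (f \<zeta>) * (complex_of_real (s * \<zeta>)) powr (-z) * phi_forest f z ts (s * \<zeta>)
       = (complex_of_real s powr (-z * of_nat (Suc m)) * P) *
        (complex_of_real (f \<zeta>) * complex_of_real \<zeta> powr (- (z * of_nat (Suc m))))"
      unfolding F[OF sz'] using powr_split[OF s zz, of z m]
      by (simp add: algebra_simps)
  qed (rule I)
qed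

end
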